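(* For every integer $n\ge1$, \[ \mathrm{QEC}(K_1+P_n)=-\tilde\alpha_n-2, \] where $\tilde\alpha_n$ is the minimal root of $\Phi_n(x)=0$. If $n\ge2$ is even, then $\tilde\alpha_n=\min\mathrm{ev}(A_n)$ and \[ \mathrm{QEC}(K_1+P_n)=-\min\mathrm{ev}(A_n)-2=-4\sin^2\frac{\pi}{2(n+1)}. \] If $n\ge1$ is odd, then $\min\mathrm{ev}(A_{n+1})\le\tilde\alpha_n<\min\mathrm{ev}(A_n)$ and \[ -4\sin^2\frac{\pi}{2(n+1)}<\mathrm{QEC}(K_1+P_n)\le-4\sin^2\frac{\pi}{2(n+2)}. \]
   Context: For a finite connected graph $G=(V,E)$ with $|V|\ge2$ and distance matrix $D=[d(i,j)]_{i,j\in V}$ (graph distance), the quadratic embedding constant is $\mathrm{QEC}(G)=\max\{\langle f,Df\rangle : f\in\mathbb{R}^V,\ \langle f,f\rangle=1,\ \langle\mathbf 1,f\rangle=0\}$, where $\mathbf 1$ is the all-ones vector and $\langle\cdot,\cdot\rangle$ the standard inner product. The join $G_1+G_2$ of disjoint graphs has vertex set $V_1\cup V_2$ and edge set $E_1\cup E_2\cup\{\{x,y\}:x\in V_1,y\in V_2\}$. $K_1$ is the one-vertex graph and $P_n$ the path on $n$ vertices; $A_n$ is the adjacency matrix of $P_n$ and $\mathrm{ev}(A_n)$ its set of eigenvalues. $U_n$ is the Chebyshev polynomial of the second kind, $U_n(\cos\theta)=\sin((n+1)\theta)/\sin\theta$, and $\tilde U_n(x)=U_n(x/2)$. Define \[ \Phi_n(x)=((n+1)x^2-6x-4n)\tilde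 U_n(x)+2(x+2)\tilde U_{n-1}(x)+2(x+2). \] (All roots of $\Phi_n$ are real.) *)

theory Defs
  imports Complex_Main
begin

definition walk_of_len :: "'a set \<Rightarrow> ('a \<Rightarrow> 'a \<Rightarrow> bool) \<Rightarrow> nat \<Rightarrow> 'a \<Rightarrow> 'a \<Rightarrow> bool" where
  "walk_of_len V E k x y \<longleftrightarrow> (\<exists>p :: nat \<Rightarrow> 'a. p 0 = x \<and> p k = y \<and> (\<forall>i\<le>k. p i \<in> V) \<and>
      (\<forall>i<k. E (p i) (p (Suc i))))"

definition gdist :: "'a set \<Rightarrow> ('a \<Rightarrow> 'a \<Rightarrow> bool) \<Rightarrow> 'a \<Rightarrow> 'a \<Rightarrow> nat" where
  "gdist V E x y = (LEAST k. walk_of_len V E k x y)"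

text \<open>Quadratic embedding constant (the maximum is attained, so it equals the supremum).\<close>
definition QEC :: "'a set \<Rightarrow> ('a \<Rightarrow> 'a \<Rightarrow> bool) \<Rightarrow> real" where
  "QEC V E = Sup {(\<Sum>x\<in>V. \<Sum>y\<in>V. f x * real (gdist V E x y) * f y) | f :: 'a \<Rightarrow> real.
      (\<Sum>x\<in>V. (f x)\<^sup>2) = 1 \<and> (\<Sum>x\<in>V. f x) = 0}"

definition join_V :: "'a set \<Rightarrow> 'b set \<Rightarrow> ('a + 'b) set" where
  "join_V V1 V2 = Inl ` V1 \<union> Inr ` V2"

fun join_E :: "('a \<Rightarrow> 'a \<Rightarrow> bool) \<Rightarrow> ('b \<Rightarrow> 'b \<Rightarrow> bool) \<Rightarrow> ('a + 'b) \<Rightarrow> ('a + 'b) \<Rightarrow> bool" where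
  "join_E E1 E2 (Inl x) (Inl y) = E1 x y"
| "join_E E1 E2 (Inr x) (Inr y) = E2 x y"
| "join_E E1 E2 (Inl x) (Inr y) = True"
| "join_E E1 E2 (Inr x) (Inl y) = True"

definition K1_V :: "unit set" where "K1_V = {()}"
definition K1_E :: "unit \<Rightarrow> unit \<Rightarrow> bool" where "K1_E x y = False"

definition path_V :: "nat \<Rightarrow> nat set" where "path_V n = {1..n}"
definition path_E :: "nat \<Rightarrow> nat \<Rightarrow> bool" where "path_E i j \<longleftrightarrow> (i + 1 = j \<or> j + 1 = i)"

definition adjA :: "nat \<Rightarrow> nat \<Rightarrow> real" where
  "adjA i j = (if path_E i j then 1 else 0)"

definition evA :: "nat \<Rightarrow> real set" where
  "evA n = {mu. \<exists>v :: nat \<Rightarrow> real. (\<exists>i\<in>{1..n}. v i \<noteq> 0) \<and>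
      (\<forall>i\<in>{1..n}. (\<Sum>j\<in>{1..n}. adjA i j * v j) = mu * v i)}"

fun chebU :: "nat \<Rightarrow> real \<Rightarrow> real" where
  "chebU 0 x = 1"
| "chebU (Suc 0) x = 2 * x"
| "chebU (Suc (Suc n)) x = 2 * x * chebU (Suc n) x - chebU n x"

definition tildeU :: "nat \<Rightarrow> real \<Rightarrow> real" where
  "tildeU n x = chebU n (x / 2)"

definition Phi :: "nat \<Rightarrow> real \<Rightarrow> real" where
  "Phi n x = ((real n + 1) * x\<^sup>2 - 6 * x - 4 * real n) * tildeU n x
     + 2 * (x + 2) * tildeU (n - 1) x + 2 * (x + 2)"

definition alpha_tilde :: "nat \<Rightarrow> real" where
  "alpha_tilde n = Min {x. Phi n x = 0}"

end

theory Submission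
  imports Defs "HOL-Analysis.Analysis" "HOL-Computational_Algebra.Polynomial"
begin



lemma tU0[simp]: "tildeU 0 x = 1" by (simp add: tildeU_def)
lemma tU1[simp]: "tildeU (Suc 0) x = x" by (simp add: tildeU_def)
lemma tUSS: "tildeU (Suc (Suc n)) x = x * tildeU (Suc n) x - tildeU n x"
  by (simp add: tildeU_def)

definition Ss :: "nat \<Rightarrow> real \<Rightarrow> real" where "Ss k x = (\<Sum>j<k. tildeU j x)"
definition Rs :: "nat \<Rightarrow> real \<Rightarrow> real" where "Rs k x = (\<Sum>j<k. Ss j x)"

lemma Ss0[simp]: "Ss 0 x = 0" by (simp add: Ss_def)
lemma Ss1[simp]: "Ss (Suc 0) x = 1" by (simp add: Ss_def)
lemma SsSuc: "Ss (Suc k) x = Ss k x + tildeU k x" by (simp add: Ss_def)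
lemma Rs0[simp]: "Rs 0 x = 0" by (simp add: Rs_def)
lemma RsSuc: "Rs (Suc k) x = Rs k x + Ss k x" by (simp add: Rs_def)

lemma Ss_rec: "Ss (Suc (Suc k)) x = x * Ss (Suc k) x - Ss k x + 1"
proof (induction k)
  case 0 then show ?case by (simp add: SsSuc)
next
  case (Suc k)
  have "Ss (Suc (Suc (Suc k))) x = Ss (Suc (Suc k)) x + tildeU (Suc (Suc k)) x" by (simp add: SsSuc)
  also have "\<dots> = x * Ss (Suc (Suc k)) x - Ss (Suc k) x + 1"
    using Suc by (simp add: tUSS SsSuc[of "Suc k"] SsSuc[of k] algebra_simps)
  finally show ?case .
qed

lemma Ss_closed: "(x - 2) * Ss (Suc k) x = tildeU (Suc k) x - tildeU k x - 1"
proof (induction k)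
  case 0 then show ?case by simp
next
  case (Suc k)
  have "(x - 2) * Ss (Suc (Suc k)) x = (x-2) * Ss (Suc k) x + (x-2) * tildeU (Suc k) x"
    by (simp add: SsSuc algebra_simps)
  also have "\<dots> = tildeU (Suc (Suc k)) x - tildeU (Suc k) x - 1"
    using Suc by (simp add: tUSS algebra_simps)
  finally show ?case .
qed

lemma Rs_closed: "(x - 2) * Rs (Suc k) x = tildeU k x - (real k + 1)"
proof (induction k)
  case 0 then show ?case by (simp add: RsSuc)
next
  case (Suc k)
  have "(x - 2) * Rs (Suc (Suc k)) x = (x-2) * Rs (Suc k) x + (x-2) * Ss (Suc k) x"
    by (simp add: RsSuc algebra_simps)
  also have "\<dots> = tildeU (Suc k) x - (real (Suc k) + 1)"
    using Suc Ss_closed[of x k] by (simp add: algebra_simps)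
  finally show ?case .
qed

lemma cassini: "(tildeU (Suc k) x)^2 + (tildeU k x)^2 - x * tildeU (Suc k) x * tildeU k x = 1"
proof (induction k)
  case 0 then show ?case by (simp add: power2_eq_square)
next
  case (Suc k)
  then show ?case by (simp add: tUSS power2_eq_square algebra_simps)
qed

definition Dd :: "nat \<Rightarrow> real \<Rightarrow> real" where
  "Dd n x = tildeU n x * ((x + 2) * Rs n x - 1) - (x + 2) * (Ss n x)^2"

lemma Phi_Dd: "Phi (Suc m) x = - ((x - 2)^2 * Dd (Suc m) x)"
proof -
  let ?u = "tildeU (Suc m) x" and ?v = "tildeU m x"
  have S: "(x - 2) * Ss (Suc m) x = ?u - ?v - 1" by (rule Ss_closed)
  have R: "(x - 2) * Rs (Suc m) x = ?v - (real m + 1)" by (rule Rs_closed)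
  have C: "?u^2 + ?v^2 - x * ?u * ?v = 1" by (rule cassini)
  have "(x - 2)^2 * Dd (Suc m) x = ?u * ((x+2) * ((x-2) * Rs (Suc m) x) * (x - 2) - (x-2)^2)
        - (x+2) * ((x-2) * Ss (Suc m) x)^2"
    by (simp add: Dd_def power2_eq_square algebra_simps)
  also have "\<dots> = ?u * ((x+2) * (?v - (real m + 1)) * (x - 2) - (x-2)^2) - (x+2) * (?u - ?v - 1)^2"
    by (simp add: S R)
  also have "\<dots> = - Phi (Suc m) x + (x + 2) * (1 - (?u^2 + ?v^2 - x * ?u * ?v))"
    by (simp add: Phi_def power2_eq_square algebra_simps)
  also have "\<dots> = - Phi (Suc m) x" using C by simp
  finally show ?thesis by simp
qed

lemma tU_trig: "sin t * tildeU k (2 * cos t) = sin (real (Suc k) * t)"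
proof (induction k rule: nat_less_induct)
  case (1 k)
  show ?case
  proof (cases k)
    case 0 then show ?thesis by simp
  next
    case (Suc j)
    show ?thesis
    proof (cases j)
      case 0
      have "sin (t * 2) = 2 * sin t * cos t" using sin_double[of t] by (simp add: mult.commute)
      then show ?thesis using \<open>j = 0\<close> \<open>k = Suc j\<close> by (simp add: mult_ac)
    next
      case (Suc i)
      have h1: "sin t * tildeU (Suc i) (2 * cos t) = sin (real (Suc (Suc i)) * t)" using 1 Suc \<open>k = Suc j\<close> by simp
      have h2: "sin t * tildeU i (2 * cos t) = sin (real (Suc i) * t)" using 1 Suc \<open>k = Suc j\<close> by simp
      have e: "sin (real (Suc (Suc (Suc i))) * t) = 2 * cos t * sin (real (Suc (Suc i)) * t) - sin (real (Suc i) * t)"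
      proof -
        have a: "real (Suc (Suc (Suc i))) * t = real (Suc (Suc i)) * t + t" by (simp add: algebra_simps)
        have b: "real (Suc i) * t = real (Suc (Suc i)) * t - t" by (simp add: algebra_simps)
        show ?thesis unfolding a b sin_add sin_diff by (simp add: algebra_simps)
      qed
      have "sin t * tildeU (Suc (Suc i)) (2 * cos t) = 2 * cos t * (sin t * tildeU (Suc i) (2 * cos t)) - sin t * tildeU i (2 * cos t)"
        by (simp add: tUSS algebra_simps)
      also have "\<dots> = sin (real (Suc (Suc (Suc i))) * t)" unfolding h1 h2 e ..
      finally show ?thesis using \<open>k = Suc j\<close> Suc by simp
    qed
  qed
qed




definition mm :: "nat \<Rightarrow> real" where "mm k = - 2 * cos (pi / (real k + 1))"

lemma U_le_m2_aux:
  assumes "x \<le> -2"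
  shows "(-1)^k * tildeU k x \<ge> real k + 1 \<and> (-1)^(Suc k) * tildeU (Suc k) x - (-1)^k * tildeU k x \<ge> 1"
proof (induction k)
  case 0 then show ?case using assms by simp
next
  case (Suc k)
  define a where "a = (-1::real)^k * tildeU k x"
  define b where "b = (-1::real)^(Suc k) * tildeU (Suc k) x"
  have c: "(-1::real)^(Suc (Suc k)) * tildeU (Suc (Suc k)) x = (- x) * b - a"
    by (simp add: a_def b_def tUSS algebra_simps)
  have ha: "a \<ge> real k + 1" "b - a \<ge> 1" using Suc unfolding a_def b_def by auto
  have hb: "b \<ge> 0" using ha by linarith
  have "(- x) * b \<ge> 2 * b" using assms hb mult_right_mono[of 2 "-x" b] by linarith
  then have "(-x) * b - a - b \<ge> 1" using ha by linarith
  then have "(-1::real)^(Suc (Suc k)) * tildeU (Suc (Suc k)) x - b \<ge> 1" unfolding c by simp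
  moreover have "b \<ge> real (Suc k) + 1" using ha by simp
  ultimately show ?case unfolding b_def by blast
qed

lemma U_le_m2: "x \<le> -2 \<Longrightarrow> (-1)^k * tildeU k x \<ge> real k + 1"
  using U_le_m2_aux by blast

lemma sin_sign:
  assumes "real k * pi < y" "y < (real k + 1) * pi"
  shows "(-1)^k * sin y > 0"
proof -
  have "sin y = sin ((y - real k * pi) + real k * pi)" by simp
  also have "\<dots> = sin (y - real k * pi) * (-1)^k" by (simp only: sin_add sin_npi cos_npi)
  finally have "(-1)^k * sin y = sin (y - real k * pi)" by (simp add: power_mult_distrib[symmetric])
  moreover have "sin (y - real k * pi) > 0" using assms by (intro sin_gt_zero) (auto simp: algebra_simps)
  ultimately show ?thesis by simp
qed

lemma mm_le2: "mm k \<le> 2" unfolding mm_def using cos_ge_minus_one[of "pi / (real k + 1)"] by linarith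

lemma U_sign:
  assumes "x < mm k"
  shows "(-1)^k * tildeU k x > 0"
proof (cases "x \<le> -2")
  case True
  then show ?thesis using U_le_m2[OF True, of k] by (smt (verit) of_nat_0_le_iff)
next
  case False
  have x2: "x < 2" using assms mm_le2[of k] by linarith
  define t where "t = arccos (x / 2)"
  have tb: "0 < t" "t < pi" using arccos_lt_bounded[of "x/2"] False x2 unfolding t_def by auto
  have ct: "cos t = x / 2" unfolding t_def using False x2 by (intro cos_arccos) auto
  have k1: "real k + 1 > 0" by simp
  have "cos t < cos (pi - pi / (real k + 1))"
    using assms ct unfolding mm_def by simp
  moreover have "0 \<le> pi - pi / (real k + 1)" "pi - pi / (real k + 1) \<le> pi"
    using k1 by (auto simp: field_simps)
  ultimately have tk: "pi - pi / (real k + 1) < t"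
    using tb cos_mono_less_eq[of t "pi - pi / (real k + 1)"] by auto
  have lo: "real k * pi < real (Suc k) * t"
  proof -
    have "real k * pi \<le> (real k + 1) * (pi - pi / (real k + 1))"
      using k1 by (simp add: field_simps)
    also have "\<dots> < (real k + 1) * t" using tk k1 by (intro mult_strict_left_mono) auto
    finally show ?thesis by (simp add: add.commute)
  qed
  have hi: "real (Suc k) * t < (real k + 1) * pi" using mult_strict_left_mono[OF tb(2) k1] by (simp add: add.commute)
  have s: "(-1)^k * sin (real (Suc k) * t) > 0" using sin_sign[OF lo hi] .
  have st: "sin t > 0" using tb by (intro sin_gt_zero) auto
  have "sin t * tildeU k x = sin (real (Suc k) * t)" using tU_trig[of t k] ct by simp
  then have eq: "sin t * ((-1)^k * tildeU k x) = (-1)^k * sin (real (Suc k) * t)" by (simp add: algebra_simps)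
  have "sin t * ((-1)^k * tildeU k x) > 0" by (subst eq) (rule s)
  then show ?thesis using st by (simp add: zero_less_mult_iff)
qed

lemma mm_pos2: "mm k + 2 > 0"
proof -
  have a: "0 < pi / (real k + 1)" by simp
  have b: "pi / (real k + 1) \<le> pi" by (simp add: field_simps)
  have "cos (pi / (real k + 1)) < cos 0" using a b by (intro cos_monotone_0_pi) auto
  then show ?thesis unfolding mm_def by simp
qed

lemma mm_mono: "mm (Suc k) < mm k" if "k \<ge> 1"
proof -
  have "cos (pi / (real k + 1)) < cos (pi / (real (Suc k) + 1))"
    using that by (intro cos_monotone_0_pi) (auto simp: field_simps)
  then show ?thesis unfolding mm_def by simp
qed

lemma U_at_mm: "k \<ge> 1 \<Longrightarrow> tildeU k (mm k) = 0"
proof -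
  assume k: "k \<ge> 1"
  define t where "t = real k * pi / (real k + 1)"
  have "cos t = - cos (pi / (real k + 1))"
  proof -
    have "t = pi - pi / (real k + 1)" unfolding t_def by (simp add: field_simps)
    then show ?thesis by simp
  qed
  then have m: "mm k = 2 * cos t" unfolding mm_def by simp
  have "sin t > 0" unfolding t_def using k by (intro sin_gt_zero) (auto simp: field_simps)
  moreover have "sin t * tildeU k (2 * cos t) = 0"
  proof -
    have "real (Suc k) * t = real k * pi" unfolding t_def by (simp add: field_simps)
    then show ?thesis by (simp add: tU_trig)
  qed
  ultimately show ?thesis using m by simp
qed




definition supp :: "nat \<Rightarrow> (nat \<Rightarrow> real) \<Rightarrow> bool" where
  "supp n g \<longleftrightarrow> (\<forall>k. (k = 0 \<or> n < k) \<longrightarrow> g k = 0)"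
definition NB :: "nat \<Rightarrow> (nat \<Rightarrow> real) \<Rightarrow> (nat \<Rightarrow> real) \<Rightarrow> real" where
  "NB n g h = (\<Sum>k\<le>n. (g k + g (Suc k)) * (h k + h (Suc k)))"
definition NN :: "nat \<Rightarrow> (nat \<Rightarrow> real) \<Rightarrow> real" where
  "NN n g = (\<Sum>k\<le>n. (g k + g (Suc k))^2)"
definition sg :: "nat \<Rightarrow> (nat \<Rightarrow> real) \<Rightarrow> real" where
  "sg n g = (\<Sum>k\<in>{1..n}. g k)"
definition QB :: "nat \<Rightarrow> (nat \<Rightarrow> real) \<Rightarrow> (nat \<Rightarrow> real) \<Rightarrow> real" where
  "QB n g h = (\<Sum>k\<in>{1..n}. g k * h k) + sg n g * sg n h"
definition QQ :: "nat \<Rightarrow> (nat \<Rightarrow> real) \<Rightarrow> real" where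
  "QQ n g = (\<Sum>k\<in>{1..n}. (g k)^2) + (sg n g)^2"

lemma NB_gen: "NB n g h = (g 0 + g 1) * h 0 + (\<Sum>i\<in>{1..n}. h i * (g (i-1) + 2 * g i + g (i+1)))
   + (g n + g (Suc n)) * h (Suc n)"
proof (induction n)
  case 0 then show ?case by (simp add: NB_def algebra_simps)
next
  case (Suc n)
  have "NB (Suc n) g h = NB n g h + (g (Suc n) + g (Suc (Suc n))) * (h (Suc n) + h (Suc (Suc n)))"
    by (simp add: NB_def)
  then show ?case using Suc by (simp add: algebra_simps)
qed

lemma NB_supp: "supp n h \<Longrightarrow> NB n g h = (\<Sum>i\<in>{1..n}. h i * (g (i-1) + 2 * g i + g (i+1)))"
  using NB_gen[of n g h] unfolding supp_def by simp

lemma NN_NB: "NN n g = NB n g g" by (simp add: NN_def NB_def power2_eq_square)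

lemma QQ_QB: "QQ n g = QB n g g" by (simp add: QQ_def QB_def power2_eq_square)

lemma NN_expand: "NN n (\<lambda>k. g k + t * h k) = NN n g + 2 * t * NB n g h + t^2 * NN n h"
proof -
  have "NN n (\<lambda>k. g k + t * h k) = (\<Sum>k\<le>n. (g k + g (Suc k))^2 + 2 * t * ((g k + g (Suc k)) * (h k + h (Suc k))) + t^2 * (h k + h (Suc k))^2)"
    unfolding NN_def by (intro sum.cong) (auto simp: power2_eq_square algebra_simps)
  also have "\<dots> = NN n g + 2 * t * NB n g h + t^2 * NN n h"
    by (simp add: NN_def NB_def sum.distrib sum_distrib_left)
  finally show ?thesis .
qed

lemma sg_lin: "sg n (\<lambda>k. g k + t * h k) = sg n g + t * sg n h"
  by (simp add: sg_def sum.distrib sum_distrib_left)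

lemma QQ_expand: "QQ n (\<lambda>k. g k + t * h k) = QQ n g + 2 * t * QB n g h + t^2 * QQ n h"
proof -
  have a: "(\<Sum>k\<in>{1..n}. (g k + t * h k)^2) = (\<Sum>k\<in>{1..n}. (g k)^2 + 2 * t * (g k * h k) + t^2 * (h k)^2)"
    by (intro sum.cong) (auto simp: power2_eq_square algebra_simps)
  show ?thesis unfolding QQ_def QB_def sg_lin a
    by (simp add: sum.distrib sum_distrib_left power2_eq_square algebra_simps)
qed

lemma NN_scale: "NN n (\<lambda>k. c * g k) = c^2 * NN n g"
  by (simp add: NN_def sum_distrib_left power2_eq_square algebra_simps)
lemma QQ_scale: "QQ n (\<lambda>k. c * g k) = c^2 * QQ n g"
  by (simp add: QQ_def sg_def sum_distrib_left[symmetric] power2_eq_square algebra_simps)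
 
lemma QQ_pos: "supp n g \<Longrightarrow> (\<exists>k. g k \<noteq> 0) \<Longrightarrow> QQ n g > 0"
proof -
  assume s: "supp n g" and "\<exists>k. g k \<noteq> 0"
  then obtain k where k: "g k \<noteq> 0" by blast
  then have kn: "k \<in> {1..n}" using s unfolding supp_def by (cases "k = 0 \<or> n < k") auto
  have "(\<Sum>j\<in>{1..n}. (g j)^2) \<ge> (g k)^2"
    using kn by (intro member_le_sum) auto
  moreover have "(g k)^2 > 0" using k by simp
  ultimately show ?thesis unfolding QQ_def by (smt (verit) zero_le_power2)
qed

lemma quad_zero:
  fixes a b :: real
  assumes "\<forall>t. a * t + b * t^2 \<ge> 0"
  shows "a = 0"
proof (rule ccontr)
  assume a: "a \<noteq> 0"
  define B where "B = \<bar>b\<bar> + 1"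
  have p: "B > 0" unfolding B_def by simp
  define t where "t = - a / (2 * B)"
  have "a * t + b * t^2 \<le> a * t + (B - 1) * t^2" unfolding B_def by (simp add: mult_right_mono)
  also have "\<dots> = - (a^2 * (B + 1) / (4 * B^2))"
    unfolding t_def using p by (simp add: power2_eq_square field_simps)
  also have "\<dots> < 0" using a p by (simp add: divide_neg_pos)
  finally show False using assms by (metis not_le)
qed

definition Kset :: "nat \<Rightarrow> (nat \<Rightarrow> real) set" where
  "Kset n = {g. supp n g \<and> QQ n g = 1}"

lemma cont_NN: "continuous_on S (NN n)"
  unfolding NN_def
  by (intro continuous_intros continuous_on_subset[OF continuous_on_product_coordinates]) auto

lemma cont_QQ: "continuous_on S (QQ n)"
  unfolding QQ_def sg_def
  by (intro continuous_intros continuous_on_subset[OF continuous_on_product_coordinates]) auto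

lemma compact_Kset: "compact (Kset n)"
proof -
  define B where "B = PiE UNIV (\<lambda>k::nat. if k \<in> {1..n} then {-1..1::real} else {0})"
  have "compactin (product_topology (\<lambda>i. euclidean) UNIV) B"
    unfolding B_def compactin_PiE by auto
  then have cB: "compact B" unfolding euclidean_product_topology by simp
  have c1: "closed {g::nat\<Rightarrow>real. QQ n g = 1}"
    by (intro closed_Collect_eq cont_QQ continuous_intros)
  have c2: "closed (\<Inter>k\<in>{k. k = 0 \<or> n < k}. {g::nat\<Rightarrow>real. g k = 0})"
    by (intro closed_INT ballI closed_Collect_eq continuous_on_product_coordinates continuous_intros)
  have eq: "Kset n = B \<inter> ({g. QQ n g = 1} \<inter> (\<Inter>k\<in>{k. k = 0 \<or> n < k}. {g::nat\<Rightarrow>real. g k = 0}))"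
  proof (intro set_eqI iffI)
    fix g assume g: "g \<in> Kset n"
    then have s: "supp n g" and q: "QQ n g = 1" unfolding Kset_def by auto
    have "\<forall>k. g k \<in> (if k \<in> {1..n} then {-1..1} else {0})"
    proof
      fix k show "g k \<in> (if k \<in> {1..n} then {-1..1} else {0})"
      proof (cases "k \<in> {1..n}")
        case True
        have "(g k)^2 \<le> (\<Sum>j\<in>{1..n}. (g j)^2)" using True by (intro member_le_sum) auto
        also have "\<dots> \<le> 1" using q unfolding QQ_def by (smt (verit) zero_le_power2)
        finally have "(g k)^2 \<le> 1" .
        then have "\<bar>g k\<bar> \<le> 1" using power2_le_imp_le[of "\<bar>g k\<bar>" 1] by simp
        then show ?thesis using True by auto
      next
        case False
        then have "k = 0 \<or> n < k" by auto
        then have "g k = 0" using s unfolding supp_def by blast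
        then show ?thesis using False by simp
      qed
    qed
    then have "g \<in> B" unfolding B_def by (auto simp: PiE_iff)
    then show "g \<in> B \<inter> ({g. QQ n g = 1} \<inter> (\<Inter>k\<in>{k. k = 0 \<or> n < k}. {g::nat\<Rightarrow>real. g k = 0}))"
      using s q unfolding supp_def by auto
  next
    fix g assume "g \<in> B \<inter> ({g. QQ n g = 1} \<inter> (\<Inter>k\<in>{k. k = 0 \<or> n < k}. {g::nat\<Rightarrow>real. g k = 0}))"
    then show "g \<in> Kset n" unfolding Kset_def supp_def by auto
  qed
  show ?thesis unfolding eq using cB c1 c2 by (intro compact_Int_closed closed_Int)
qed

definition e1 :: "nat \<Rightarrow> real" where "e1 k = (if k = 1 then 1 else 0)"

lemma e1_props: "n \<ge> 1 \<Longrightarrow> supp n e1 \<and> QQ n e1 = 2 \<and> NN n e1 = 2"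
proof -
  assume n: "n \<ge> 1"
  have n0: "0 < n" using n by simp
  have s: "supp n e1" using n0 unfolding supp_def e1_def by auto
  have "(\<Sum>k\<in>{1..n}. (e1 k)^2) = (\<Sum>k\<in>{1..n}. if k = 1 then 1 else 0)" by (intro sum.cong) (auto simp: e1_def)
  then have a: "(\<Sum>k\<in>{1..n}. (e1 k)^2) = 1" using n0 by (simp add: sum.delta Suc_le_eq)
  have b: "sg n e1 = 1" using n0 by (simp add: sg_def e1_def sum.delta Suc_le_eq)
  have "NN n e1 = NB n e1 e1" by (rule NN_NB)
  also have "\<dots> = (\<Sum>i\<in>{1..n}. e1 i * (e1 (i-1) + 2 * e1 i + e1 (i+1)))" using s by (rule NB_supp)
  also have "\<dots> = (\<Sum>i\<in>{1..n}. if i = 1 then 2 else 0)" using n0 by (intro sum.cong) (auto simp: e1_def)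
  also have "\<dots> = 2" using n by (simp add: sum.delta Suc_le_eq)
  finally show ?thesis using s a b unfolding QQ_def by simp
qed

lemma Kset_ne: "n \<ge> 1 \<Longrightarrow> Kset n \<noteq> {}"
proof -
  assume n: "n \<ge> 1"
  define g where "g k = (1 / sqrt 2) * e1 k" for k
  have "supp n g" using e1_props[OF n] unfolding g_def supp_def by auto
  moreover have "QQ n g = 1" unfolding g_def QQ_scale using e1_props[OF n] by (simp add: power_divide)
  ultimately show ?thesis unfolding Kset_def by auto
qed

definition lam :: "nat \<Rightarrow> real" where "lam n = Inf (NN n ` Kset n)"

lemma lam_props:
  assumes n: "n \<ge> 1"
  shows "\<exists>g\<in>Kset n. NN n g = lam n" "\<And>g. g \<in> Kset n \<Longrightarrow> lam n \<le> NN n g"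
proof -
  obtain g where g: "g \<in> Kset n" "\<And>h. h \<in> Kset n \<Longrightarrow> NN n g \<le> NN n h"
    using continuous_attains_inf[OF compact_Kset Kset_ne[OF n] cont_NN] by blast
  have "lam n = NN n g" unfolding lam_def using g by (intro cInf_eq_minimum) auto
  then show "\<exists>g\<in>Kset n. NN n g = lam n" using g by auto
  fix h assume "h \<in> Kset n" then show "lam n \<le> NN n h" using g \<open>lam n = NN n g\<close> by simp
qed

lemma lam_lower:
  assumes n: "n \<ge> 1" and s: "supp n g"
  shows "lam n * QQ n g \<le> NN n g"
proof (cases "\<exists>k. g k \<noteq> 0")
  case False
  then have "g = (\<lambda>k. 0)" by auto
  then show ?thesis by (simp add: NN_def QQ_def sg_def)
next
  case True
  have q: "QQ n g > 0" using QQ_pos[OF s True] .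
  define c where "c = 1 / sqrt (QQ n g)"
  have c2: "c^2 = 1 / QQ n g" unfolding c_def using q by (simp add: power_divide)
  define h where "h k = c * g k" for k
  have "h \<in> Kset n" unfolding Kset_def h_def using s q c2
    by (auto simp: supp_def QQ_scale[of n c g, unfolded h_def])
  then have "lam n \<le> NN n h" by (rule lam_props(2)[OF n])
  also have "NN n h = NN n g / QQ n g" unfolding h_def NN_scale c2 by simp
  finally show ?thesis using q by (simp add: field_simps)
qed

lemma lam_le: "n \<ge> 1 \<Longrightarrow> supp n g \<Longrightarrow> (\<exists>k. g k \<noteq> 0) \<Longrightarrow> NN n g = mu * QQ n g \<Longrightarrow> lam n \<le> mu"
  using lam_lower[of n g] QQ_pos[of n g] by (metis mult_le_cancel_right_pos)

lemma lam_le1: "n \<ge> 1 \<Longrightarrow> lam n \<le> 1"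
  using lam_lower[of n e1] e1_props[of n] by simp




lemma sum_shift1: "(\<Sum>k\<in>{1..n}. f k) = (\<Sum>k<n. f (Suc k))"
proof (induction n)
  case 0 then show ?case by simp
next
  case (Suc n)
  have "(\<Sum>k\<in>{1..Suc n}. f k) = (\<Sum>k\<in>{1..n}. f k) + f (Suc n)" by simp
  then show ?case using Suc by simp
qed

lemma eig_NN:
  assumes s: "supp n g" and e: "\<And>i. i \<in> {1..n} \<Longrightarrow> g (i-1) + 2 * g i + g (i+1) = mu * (g i + sg n g)"
  shows "NN n g = mu * QQ n g"
proof -
  have "NN n g = (\<Sum>i\<in>{1..n}. g i * (g (i-1) + 2 * g i + g (i+1)))"
    using NN_NB NB_supp[OF s] by simp
  also have "\<dots> = (\<Sum>i\<in>{1..n}. mu * ((g i)^2 + g i * sg n g))"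
    using e by (intro sum.cong) (auto simp: power2_eq_square algebra_simps)
  also have "\<dots> = mu * QQ n g"
  proof -
    have "(\<Sum>i\<in>{1..n}. mu * ((g i)^2 + g i * sg n g)) = mu * ((\<Sum>i\<in>{1..n}. (g i)^2) + (\<Sum>i\<in>{1..n}. g i) * sg n g)"
      by (simp add: sum.distrib sum_distrib_left[symmetric] sum_distrib_right[symmetric])
    then show ?thesis by (simp add: QQ_def sg_def power2_eq_square)
  qed
  finally show ?thesis .
qed

lemma eig_NN0:
  assumes s: "supp n g" and e: "\<And>i. i \<in> {1..n} \<Longrightarrow> g (i-1) + 2 * g i + g (i+1) = mu * g i"
  shows "NN n g = mu * (\<Sum>i\<in>{1..n}. (g i)^2)"
proof -
  have "NN n g = (\<Sum>i\<in>{1..n}. g i * (g (i-1) + 2 * g i + g (i+1)))"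
    using NN_NB NB_supp[OF s] by simp
  also have "\<dots> = (\<Sum>i\<in>{1..n}. mu * (g i)^2)"
    using e by (intro sum.cong) (auto simp: power2_eq_square algebra_simps)
  finally show ?thesis by (simp add: sum_distrib_left)
qed

definition ind :: "nat \<Rightarrow> nat \<Rightarrow> real" where "ind i k = (if k = i then 1 else 0)"

lemma euler:
  assumes n: "n \<ge> 1" and g: "g \<in> Kset n" and gl: "NN n g = lam n" and i: "i \<in> {1..n}"
  shows "g (i-1) + 2 * g i + g (i+1) = lam n * (g i + sg n g)"
proof -
  have sg: "supp n g" and qg: "QQ n g = 1" using g unfolding Kset_def by auto
  have sh: "supp n (ind i)" using i unfolding supp_def ind_def by auto
  have "\<forall>t. 2 * (NB n g (ind i) - lam n * QB n g (ind i)) * t + (NN n (ind i) - lam n * QQ n (ind i)) * t^2 \<ge> 0"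
  proof
    fix t
    have "supp n (\<lambda>k. g k + t * ind i k)" using sg sh unfolding supp_def by auto
    then have "lam n * QQ n (\<lambda>k. g k + t * ind i k) \<le> NN n (\<lambda>k. g k + t * ind i k)"
      by (rule lam_lower[OF n])
    then show "2 * (NB n g (ind i) - lam n * QB n g (ind i)) * t + (NN n (ind i) - lam n * QQ n (ind i)) * t^2 \<ge> 0"
      unfolding NN_expand QQ_expand gl qg by (simp add: algebra_simps)
  qed
  then have "2 * (NB n g (ind i) - lam n * QB n g (ind i)) = 0" by (rule quad_zero)
  then have eq: "NB n g (ind i) = lam n * QB n g (ind i)" by simp
  have "NB n g (ind i) = (\<Sum>j\<in>{1..n}. if j = i then g (j-1) + 2 * g j + g (j+1) else 0)"
    unfolding NB_supp[OF sh] by (intro sum.cong) (auto simp: ind_def)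
  also have "\<dots> = g (i-1) + 2 * g i + g (i+1)" using i by (simp add: sum.delta)
  finally have a: "NB n g (ind i) = g (i-1) + 2 * g i + g (i+1)" .
  have b1: "(\<Sum>j\<in>{1..n}. g j * ind i j) = g i"
  proof -
    have "(\<Sum>j\<in>{1..n}. g j * ind i j) = (\<Sum>j\<in>{1..n}. if j = i then g j else 0)"
      by (intro sum.cong) (auto simp: ind_def)
    then show ?thesis using i by (simp add: sum.delta)
  qed
  have b2: "sg n (ind i) = 1" using i by (simp add: sg_def ind_def sum.delta)
  show ?thesis using eq a b1 b2 unfolding QB_def by simp
qed

lemma recur:
  assumes w0: "w 0 = 0" and e: "\<And>i. 1 \<le> i \<Longrightarrow> i \<le> n \<Longrightarrow> w (i-1) + w (i+1) = x * w i + c"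
  shows "k \<le> n \<Longrightarrow> w (Suc k) = w 1 * tildeU k x + c * Ss k x"
proof (induction k rule: less_induct)
  case (less k)
  consider "k = 0" | "k = 1" | i where "k = Suc (Suc i)"
    by (metis One_nat_def not0_implies_Suc)
  then show ?case
  proof cases
    case 1 then show ?thesis by simp
  next
    case 2
    have "w 0 + w (Suc (Suc 0)) = x * w 1 + c" using e[of 1] less.prems 2 by simp
    then show ?thesis using w0 2 by simp
  next
    case 3
    have h1: "w (Suc (Suc i)) = w 1 * tildeU (Suc i) x + c * Ss (Suc i) x"
      using less.IH[of "Suc i"] less.prems 3 by simp
    have h2: "w (Suc i) = w 1 * tildeU i x + c * Ss i x"
      using less.IH[of "i"] less.prems 3 by simp
    have "w (Suc (Suc i) - 1) + w (Suc (Suc i) + 1) = x * w (Suc (Suc i)) + c"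
      using e[of "Suc (Suc i)"] less.prems 3 by simp
    then have "w (Suc (Suc (Suc i))) = x * w (Suc (Suc i)) - w (Suc i) + c" by simp
    also have "\<dots> = w 1 * tildeU (Suc (Suc i)) x + c * Ss (Suc (Suc i)) x"
      unfolding h1 h2 tUSS Ss_rec by (simp add: algebra_simps)
    finally show ?thesis using 3 by simp
  qed
qed

lemma det2:
  fixes u S R a c y :: real
  assumes e1: "a * u + c * S = 0" and e2: "y * S * a + (y * R - 1) * c = 0" and ac: "a \<noteq> 0 \<or> c \<noteq> 0"
  shows "u * (y * R - 1) - y * S^2 = 0"
proof -
  have "(u * (y * R - 1) - y * S^2) * a = (a * u + c * S) * (y * R - 1) - S * (y * S * a + (y * R - 1) * c)"
    by (simp add: algebra_simps power2_eq_square)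
  then have A: "(u * (y * R - 1) - y * S^2) * a = 0" using e1 e2 by simp
  have "(u * (y * R - 1) - y * S^2) * c = u * (y * S * a + (y * R - 1) * c) - y * S * (a * u + c * S)"
    by (simp add: algebra_simps power2_eq_square)
  then have B: "(u * (y * R - 1) - y * S^2) * c = 0" using e1 e2 by simp
  show ?thesis using A B ac by auto
qed

lemma lam_root:
  assumes n: "n \<ge> 1"
  shows "Phi n (lam n - 2) = 0"
proof -
  obtain g where g: "g \<in> Kset n" and gl: "NN n g = lam n" using lam_props(1)[OF n] by blast
  have sg: "supp n g" and qg: "QQ n g = 1" using g unfolding Kset_def by auto
  define x where "x = lam n - 2"
  define s where "s = sg n g"
  define c where "c = (x + 2) * s"
  define a where "a = g 1"
  have g0: "g 0 = 0" using sg unfolding supp_def by auto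
  have rec: "\<And>k. k \<le> n \<Longrightarrow> g (Suc k) = a * tildeU k x + c * Ss k x"
    unfolding a_def
  proof (rule recur[where n=n])
    show "g 0 = 0" by (rule g0)
    fix i assume "1 \<le> i" "i \<le> n"
    then have "g (i-1) + 2 * g i + g (i+1) = lam n * (g i + sg n g)" using euler[OF n g gl] by auto
    then show "g (i - 1) + g (i + 1) = x * g i + c" unfolding c_def x_def s_def by (simp add: algebra_simps)
  qed
  have gn: "g (Suc n) = 0" using sg unfolding supp_def by auto
  have eq1: "a * tildeU n x + c * Ss n x = 0" using rec[of n] gn by simp
  have "s = (\<Sum>k<n. g (Suc k))" unfolding s_def sg_def by (rule sum_shift1)
  also have "\<dots> = (\<Sum>k<n. a * tildeU k x + c * Ss k x)" using rec by (intro sum.cong) auto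
  also have "\<dots> = a * Ss n x + c * Rs n x" by (simp add: Ss_def Rs_def sum.distrib sum_distrib_left)
  finally have ss: "s = a * Ss n x + c * Rs n x" .
  have "(x + 2) * Ss n x * a + ((x + 2) * Rs n x - 1) * c = (x + 2) * (a * Ss n x + c * Rs n x) - c"
    by (simp add: algebra_simps)
  also have "\<dots> = (x + 2) * s - c" using ss by simp
  also have "\<dots> = 0" unfolding c_def by simp
  finally have eq2: "(x + 2) * Ss n x * a + ((x + 2) * Rs n x - 1) * c = 0" .
  have ac: "a \<noteq> 0 \<or> c \<noteq> 0"
  proof (rule ccontr)
    assume "\<not> (a \<noteq> 0 \<or> c \<noteq> 0)"
    then have z: "a = 0" "c = 0" by auto
    have "\<forall>k. g k = 0"
    proof
      fix k show "g k = 0"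
      proof (cases k)
        case 0 then show ?thesis using g0 by simp
      next
        case (Suc j)
        show ?thesis
        proof (cases "j \<le> n")
          case True then show ?thesis using rec[OF True] z Suc by simp
        next
          case False then show ?thesis using sg Suc unfolding supp_def by auto
        qed
      qed
    qed
    then have "QQ n g = 0" by (simp add: QQ_def sg_def)
    then show False using qg by simp
  qed
  have D0: "Dd n x = 0" unfolding Dd_def by (rule det2[OF eq1 eq2 ac])
  obtain m where m: "n = Suc m" using n by (cases n) auto
  show ?thesis using Phi_Dd[of m x] D0 m unfolding x_def by simp
qed




lemma kernel_vec:
  assumes n: "n \<ge> 1" and D0: "Dd n x = 0"
  shows "lam n \<le> x + 2"
proof -
  let ?u = "tildeU n x" and ?S = "Ss n x" and ?R = "Rs n x"
  obtain a c where e1: "a * ?u + c * ?S = 0" and e2: "(x + 2) * ?S * a + ((x + 2) * ?R - 1) * c = 0"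
    and ac: "a \<noteq> 0 \<or> c \<noteq> 0"
  proof (cases "?u = 0 \<and> ?S = 0")
    case True
    show ?thesis by (rule that[of 1 0]) (use True in auto)
  next
    case False
    show ?thesis
    proof (rule that[of "- ?S" "?u"])
      show "- ?S * ?u + ?u * ?S = 0" by simp
      show "(x + 2) * ?S * - ?S + ((x + 2) * ?R - 1) * ?u = 0"
        using D0 unfolding Dd_def by (simp add: power2_eq_square algebra_simps)
      show "- ?S \<noteq> 0 \<or> ?u \<noteq> 0" using False by auto
    qed
  qed
  define g where "g k = (if 1 \<le> k \<and> k \<le> n then a * tildeU (k - 1) x + c * Ss (k - 1) x else 0)" for k
  have sg: "supp n g" unfolding supp_def g_def by auto
  have gS: "g (Suc k) = a * tildeU k x + c * Ss k x" if "k \<le> n" for k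
  proof (cases "k = n")
    case True then show ?thesis using e1 unfolding g_def by simp
  next
    case False then show ?thesis using that unfolding g_def by simp
  qed
  have g0: "g 0 = 0" unfolding g_def by simp
  have "sg n g = (\<Sum>k<n. g (Suc k))" unfolding sg_def by (rule sum_shift1)
  also have "\<dots> = (\<Sum>k<n. a * tildeU k x + c * Ss k x)" using gS by (intro sum.cong) auto
  also have "\<dots> = a * ?S + c * ?R" by (simp add: Ss_def Rs_def sum.distrib sum_distrib_left)
  finally have ss: "sg n g = a * ?S + c * ?R" .
  have cs: "c = (x + 2) * sg n g" using e2 unfolding ss by (simp add: algebra_simps)
  have rec: "g (i - 1) + g (i + 1) = x * g i + c" if i: "1 \<le> i" "i \<le> n" for i
  proof (cases "i = 1")
    case True
    have "g (Suc (Suc 0)) = a * x + c" using gS[of 1] n by simp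
    moreover have "g 1 = a" using gS[of 0] by simp
    ultimately show ?thesis using True g0 by simp
  next
    case False
    then obtain j where j: "i = Suc (Suc j)" using i by (metis One_nat_def Suc_le_D Suc_le_lessD less_Suc_eq_0_disj)
    have h0: "g (Suc j) = a * tildeU j x + c * Ss j x" using gS[of j] i j by simp
    have h1: "g (Suc (Suc j)) = a * tildeU (Suc j) x + c * Ss (Suc j) x" using gS[of "Suc j"] i j by simp
    have h2: "g (Suc (Suc (Suc j))) = a * tildeU (Suc (Suc j)) x + c * Ss (Suc (Suc j)) x" using gS[of "Suc (Suc j)"] i j by simp
    show ?thesis unfolding j using h0 h1 h2 by (simp add: tUSS Ss_rec algebra_simps)
  qed
  have eig: "g (i-1) + 2 * g i + g (i+1) = (x + 2) * (g i + sg n g)" if "i \<in> {1..n}" for i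
    using rec[of i] that cs by (simp add: algebra_simps)
  have nz: "\<exists>k. g k \<noteq> 0"
  proof (rule ccontr)
    assume "\<not> (\<exists>k. g k \<noteq> 0)"
    then have z: "\<And>k. g k = 0" by auto
    have "g 1 = a" using gS[of 0] by simp
    then have "a = 0" using z by simp
    moreover have "c = 0" using rec[of 1] n z by simp
    ultimately show False using ac by simp
  qed
  show ?thesis by (rule lam_le[OF n sg nz eig_NN[OF sg eig]])
qed

lemma root_ge:
  assumes n: "n \<ge> 1" and r: "Phi n x = 0"
  shows "lam n - 2 \<le> x"
proof (cases "x \<ge> -1")
  case True then show ?thesis using lam_le1[OF n] by simp
next
  case False
  obtain m where m: "n = Suc m" using n by (cases n) auto
  have "(x - 2)^2 \<noteq> 0" using False by simp
  then have "Dd n x = 0" using Phi_Dd[of m x] r m by simp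
  then have "lam n \<le> x + 2" by (rule kernel_vec[OF n])
  then show ?thesis by simp
qed

fun pU :: "nat \<Rightarrow> real poly" where
  "pU 0 = 1"
| "pU (Suc 0) = [:0, 1:]"
| "pU (Suc (Suc n)) = [:0, 1:] * pU (Suc n) - pU n"

lemma poly_pU: "poly (pU n) x = tildeU n x"
  by (induction n rule: pU.induct) (simp_all add: tUSS)

definition pPhi :: "nat \<Rightarrow> real poly" where
  "pPhi n = [: - 4 * real n, -6, real n + 1 :] * pU n + [:4, 2:] * pU (n - 1) + [:4, 2:]"

lemma poly_pPhi: "poly (pPhi n) x = Phi n x"
  by (simp add: pPhi_def Phi_def poly_pU power2_eq_square algebra_simps)

lemma Phi_sign_le_m2:
  assumes n: "n \<ge> 1" and x: "x \<le> -2"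
  shows "(-1)^n * Phi n x > 0"
proof -
  obtain m where m: "n = Suc m" using n by (cases n) auto
  define P where "P = (real n + 1) * x^2 - 6 * x - 4 * real n"
  define yn where "yn = (-1)^n * tildeU n x"
  define ym where "ym = (-1)^m * tildeU m x"
  have hyn: "yn \<ge> real n + 1" using U_le_m2[OF x] unfolding yn_def by simp
  have hym: "ym \<ge> real m + 1" using U_le_m2[OF x] unfolding ym_def by simp
  have "(-x) * (-x) \<ge> 2 * 2" by (rule mult_mono) (use x in auto)
  then have "x^2 \<ge> 4" by (simp add: power2_eq_square)
  then have "(real n + 1) * x^2 \<ge> (real n + 1) * 4" by (intro mult_left_mono) auto
  then have P16: "P \<ge> 16" unfolding P_def using x by simp
  have e: "(-1)^n * Phi n x = P * yn + 2 * (x + 2) * ((-1)^n - ym)"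
    unfolding Phi_def P_def yn_def ym_def m by (simp add: algebra_simps)
  have "(-1::real)^n \<le> 1" by (cases "even n") auto
  then have "(-1)^n - ym \<le> 0" using hym by simp
  moreover have "x + 2 \<le> 0" using x by simp
  ultimately have "2 * (x + 2) * ((-1)^n - ym) \<ge> 0" by (simp add: mult_nonpos_nonpos)
  moreover have "P * yn \<ge> 16 * 1" using P16 hyn by (intro mult_mono) auto
  ultimately show ?thesis unfolding e by simp
qed

lemma finite_roots: "n \<ge> 1 \<Longrightarrow> finite {x. Phi n x = 0}"
proof -
  assume n: "n \<ge> 1"
  have "pPhi n \<noteq> 0"
  proof
    assume "pPhi n = 0"
    then have "Phi n (-2) = 0" using poly_pPhi[of n "-2"] by simp
    then show False using Phi_sign_le_m2[OF n, of "-2"] by simp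
  qed
  then have "finite {x. poly (pPhi n) x = 0}" by (rule poly_roots_finite)
  then show ?thesis by (simp add: poly_pPhi)
qed

lemma alpha_lam: "n \<ge> 1 \<Longrightarrow> alpha_tilde n = lam n - 2"
  unfolding alpha_tilde_def
  by (rule Min_eqI) (auto simp: finite_roots root_ge lam_root)




abbreviation VV :: "nat \<Rightarrow> (unit + nat) set" where "VV n \<equiv> join_V K1_V (path_V n)"
abbreviation EE :: "(unit + nat) \<Rightarrow> (unit + nat) \<Rightarrow> bool" where "EE \<equiv> join_E K1_E path_E"

lemma sum_VV: "sum h (VV n) = h (Inl ()) + (\<Sum>k\<in>{1..n}. h (Inr k))"
proof -
  have "VV n = Inl ` {()} \<union> Inr ` {1..n}" by (simp add: join_V_def K1_V_def path_V_def)
  moreover have "Inl ` {()} \<inter> Inr ` {1..n} = ({} :: (unit + nat) set)" by auto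
  ultimately have "sum h (VV n) = sum h (Inl ` {()}) + sum h (Inr ` {1..n})"
    by (simp add: sum.union_disjoint)
  also have "sum h (Inr ` {1..n}) = (\<Sum>k\<in>{1..n}. h (Inr k))"
    by (subst sum.reindex) (auto simp: inj_on_def)
  finally show ?thesis by simp
qed

lemma walk0: "walk_of_len V E 0 x y \<longleftrightarrow> x = y \<and> x \<in> V"
  unfolding walk_of_len_def by auto

lemma walk1: "walk_of_len V E 1 x y \<Longrightarrow> E x y"
  unfolding walk_of_len_def by auto

lemma walk1I: "x \<in> V \<Longrightarrow> y \<in> V \<Longrightarrow> E x y \<Longrightarrow> walk_of_len V E 1 x y"
  unfolding walk_of_len_def by (rule exI[of _ "\<lambda>i. if i = 0 then x else y"]) auto

lemma walk2I: "x \<in> V \<Longrightarrow> y \<in> V \<Longrightarrow> z \<in> V \<Longrightarrow> E x z \<Longrightarrow> E z y \<Longrightarrow> walk_of_len V E 2 x y"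
  unfolding walk_of_len_def
  apply (rule exI[of _ "\<lambda>i. if i = 0 then x else if i = 1 then z else y"])
  apply (auto simp: numeral_2_eq_2 less_Suc_eq le_Suc_eq)
  done

lemma gdist_VV:
  assumes x: "x \<in> VV n" and y: "y \<in> VV n"
  shows "gdist (VV n) EE x y = (if x = y then 0 else if EE x y then 1 else 2)"
proof (cases "x = y")
  case True
  then have "walk_of_len (VV n) EE 0 x y" using x by (simp add: walk0)
  then show ?thesis unfolding gdist_def using True by (simp add: Least_eq_0)
next
  case False
  note xy = False
  show ?thesis
  proof (cases "EE x y")
    case True
    have "(LEAST k. walk_of_len (VV n) EE k x y) = 1"
    proof (rule Least_equality)
      show "walk_of_len (VV n) EE 1 x y" by (rule walk1I) (use x y True in auto)
      fix k assume "walk_of_len (VV n) EE k x y"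
      then show "1 \<le> k" using xy by (cases k) (auto simp: walk0)
    qed
    then show ?thesis unfolding gdist_def using xy True by simp
  next
    case False
    obtain i where i: "x = Inr i" using x xy False
      by (cases x) (auto simp: join_V_def K1_V_def, cases y, auto)
    obtain j where j: "y = Inr j" using y xy False i
      by (cases y) (auto simp: join_V_def K1_V_def)
    have w2: "walk_of_len (VV n) EE 2 x y"
      by (rule walk2I[where z="Inl ()"]) (use x y i j in \<open>auto simp: join_V_def K1_V_def\<close>)
    have "(LEAST k. walk_of_len (VV n) EE k x y) = 2"
    proof (rule Least_equality)
      show "walk_of_len (VV n) EE 2 x y" by (rule w2)
      fix k assume k: "walk_of_len (VV n) EE k x y"
      show "2 \<le> k"
      proof (rule ccontr)
        assume "\<not> 2 \<le> k"
        then have "k = 0 \<or> k = 1" by auto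
        then show False
        proof
          assume "k = 0" then show False using k xy by (simp add: walk0)
        next
          assume "k = 1" then have "EE x y" using k walk1 by metis
          then show False using False by simp
        qed
      qed
    qed
    then show ?thesis unfolding gdist_def using xy False by simp
  qed
qed

lemma delta_supp:
  assumes s: "supp n g" shows "(\<Sum>j\<in>{1..n}. if j = a then g j else 0) = g a"
proof (cases "a \<in> {1..n}")
  case True then show ?thesis by (simp add: sum.delta)
next
  case False
  then have "a = 0 \<or> n < a" by auto
  then have "g a = 0" using s unfolding supp_def by blast
  then show ?thesis using False by (simp add: sum.delta)
qed

lemma nb_sum:
  assumes s: "supp n g" and i: "i \<in> {1..n}"
  shows "(\<Sum>j\<in>{1..n}. if path_E i j then g j else 0) = g (i-1) + g (i+1)"
proof -
  have "(\<Sum>j\<in>{1..n}. if path_E i j then g j else 0)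
      = (\<Sum>j\<in>{1..n}. (if j = i + 1 then g j else 0) + (if j = i - 1 then g j else 0))"
    using i by (intro sum.cong) (auto simp: path_E_def)
  also have "\<dots> = (\<Sum>j\<in>{1..n}. if j = i + 1 then g j else 0) + (\<Sum>j\<in>{1..n}. if j = i - 1 then g j else 0)"
    by (rule sum.distrib)
  also have "\<dots> = g (i+1) + g (i-1)" by (simp only: delta_supp[OF s])
  finally show ?thesis by simp
qed

definition gof :: "nat \<Rightarrow> (unit + nat \<Rightarrow> real) \<Rightarrow> nat \<Rightarrow> real" where
  "gof n f k = (if k \<in> {1..n} then f (Inr k) else 0)"

lemma gof_supp: "supp n (gof n f)" unfolding supp_def gof_def by auto

lemma val_formula:
  fixes f :: "unit + nat \<Rightarrow> real" and n :: nat
  defines "g \<equiv> gof n f"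
  shows "(\<Sum>x\<in>VV n. \<Sum>y\<in>VV n. f x * real (gdist (VV n) EE x y) * f y)
     = 2 * f (Inl ()) * sg n g + 2 * (sg n g)^2 - NN n g"
proof -
  have s: "supp n g" unfolding g_def by (rule gof_supp)
  have gk: "\<And>k. k \<in> {1..n} \<Longrightarrow> f (Inr k) = g k" unfolding g_def gof_def by simp
  have inV: "Inl () \<in> VV n" "\<And>k. k \<in> {1..n} \<Longrightarrow> Inr k \<in> VV n"
    by (auto simp: join_V_def K1_V_def path_V_def)
  have d1: "\<And>k. k \<in> {1..n} \<Longrightarrow> gdist (VV n) EE (Inl ()) (Inr k) = 1"
    using inV by (simp add: gdist_VV)
  have d2: "\<And>k. k \<in> {1..n} \<Longrightarrow> gdist (VV n) EE (Inr k) (Inl ()) = 1"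
    using inV by (simp add: gdist_VV)
  have d0: "gdist (VV n) EE (Inl ()) (Inl ()) = 0" using inV by (simp add: gdist_VV)
  have d3: "\<And>i j. i \<in> {1..n} \<Longrightarrow> j \<in> {1..n} \<Longrightarrow> real (gdist (VV n) EE (Inr i) (Inr j))
      = 2 - 2 * (if j = i then 1 else 0) - (if path_E i j then 1 else 0)"
    using inV by (auto simp: gdist_VV path_E_def)
  have row: "(\<Sum>j\<in>{1..n}. real (gdist (VV n) EE (Inr i) (Inr j)) * g j) = 2 * sg n g - 2 * g i - (g (i-1) + g (i+1))"
    if i: "i \<in> {1..n}" for i
  proof -
    have "(\<Sum>j\<in>{1..n}. real (gdist (VV n) EE (Inr i) (Inr j)) * g j)
       = (\<Sum>j\<in>{1..n}. 2 * g j - 2 * (if j = i then g j else 0) - (if path_E i j then g j else 0))"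
      using i d3 by (intro sum.cong) auto
    also have "\<dots> = 2 * (\<Sum>j\<in>{1..n}. g j) - 2 * (\<Sum>j\<in>{1..n}. if j = i then g j else 0) - (\<Sum>j\<in>{1..n}. if path_E i j then g j else 0)"
      by (simp only: sum_subtractf sum_distrib_left)
    also have "\<dots> = 2 * sg n g - 2 * g i - (g (i-1) + g (i+1))"
      by (simp only: sg_def delta_supp[OF s] nb_sum[OF s i])
    finally show ?thesis .
  qed
  have "(\<Sum>x\<in>VV n. \<Sum>y\<in>VV n. f x * real (gdist (VV n) EE x y) * f y)
     = (\<Sum>x\<in>VV n. f x * real (gdist (VV n) EE x (Inl ())) * f (Inl ())
          + (\<Sum>k\<in>{1..n}. f x * real (gdist (VV n) EE x (Inr k)) * g k))"
    by (intro sum.cong refl) (simp add: sum_VV gk)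
  also have "\<dots> = f (Inl ()) * sg n g
     + (\<Sum>i\<in>{1..n}. g i * f (Inl ()) + g i * (2 * sg n g - 2 * g i - (g (i-1) + g (i+1))))"
  proof -
    have A: "(\<Sum>k\<in>{1..n}. f (Inl ()) * real (gdist (VV n) EE (Inl ()) (Inr k)) * g k) = f (Inl ()) * sg n g"
      by (simp add: d1 sg_def sum_distrib_left)
    have B: "(\<Sum>i\<in>{1..n}. f (Inr i) * real (gdist (VV n) EE (Inr i) (Inl ())) * f (Inl ())
          + (\<Sum>k\<in>{1..n}. f (Inr i) * real (gdist (VV n) EE (Inr i) (Inr k)) * g k))
        = (\<Sum>i\<in>{1..n}. g i * f (Inl ()) + g i * (2 * sg n g - 2 * g i - (g (i-1) + g (i+1))))"
    proof (intro sum.cong refl)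
      fix i assume i: "i \<in> {1..n}"
      have "(\<Sum>k\<in>{1..n}. f (Inr i) * real (gdist (VV n) EE (Inr i) (Inr k)) * g k)
          = g i * (\<Sum>k\<in>{1..n}. real (gdist (VV n) EE (Inr i) (Inr k)) * g k)"
        using gk[OF i] by (simp add: sum_distrib_left mult.assoc)
      then show "f (Inr i) * real (gdist (VV n) EE (Inr i) (Inl ())) * f (Inl ())
          + (\<Sum>k\<in>{1..n}. f (Inr i) * real (gdist (VV n) EE (Inr i) (Inr k)) * g k)
          = g i * f (Inl ()) + g i * (2 * sg n g - 2 * g i - (g (i-1) + g (i+1)))"
        using row[OF i] d2[OF i] gk[OF i] by simp
    qed
    show ?thesis unfolding sum_VV using A B d0 by simp
  qed
  also have "\<dots> = 2 * f (Inl ()) * sg n g + 2 * (sg n g)^2 - NN n g"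
  proof -
    have N: "NN n g = (\<Sum>i\<in>{1..n}. g i * (g (i-1) + 2 * g i + g (i+1)))"
      using NN_NB NB_supp[OF s] by simp
    have "(\<Sum>i\<in>{1..n}. g i * f (Inl ()) + g i * (2 * sg n g - 2 * g i - (g (i-1) + g (i+1))))
        = f (Inl ()) * sg n g + 2 * sg n g * sg n g - (\<Sum>i\<in>{1..n}. g i * (g (i-1) + 2 * g i + g (i+1)))"
      by (simp add: sum.distrib sum_subtractf sum_distrib_left sum_distrib_right sg_def algebra_simps)
    then show ?thesis using N by (simp add: power2_eq_square)
  qed
  finally show ?thesis .
qed

lemma sumf: "(\<Sum>x\<in>VV n. f x) = f (Inl ()) + sg n (gof n f)"
  by (simp add: sum_VV sg_def gof_def)

lemma sumf2: "(\<Sum>x\<in>VV n. (f x)^2) = (f (Inl ()))^2 + (\<Sum>k\<in>{1..n}. (gof n f k)^2)"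
  by (simp add: sum_VV gof_def)

lemma QEC_lam:
  assumes n: "n \<ge> 1"
  shows "QEC (VV n) EE = - lam n"
proof -
  define S where "S = {(\<Sum>x\<in>VV n. \<Sum>y\<in>VV n. f x * real (gdist (VV n) EE x y) * f y) | f :: unit + nat \<Rightarrow> real.
      (\<Sum>x\<in>VV n. (f x)\<^sup>2) = 1 \<and> (\<Sum>x\<in>VV n. f x) = 0}"
  have ub: "y \<le> - lam n" if "y \<in> S" for y
  proof -
    obtain f where y: "y = (\<Sum>x\<in>VV n. \<Sum>y\<in>VV n. f x * real (gdist (VV n) EE x y) * f y)"
      and f1: "(\<Sum>x\<in>VV n. (f x)\<^sup>2) = 1" and f0: "(\<Sum>x\<in>VV n. f x) = 0"
      using \<open>y \<in> S\<close> unfolding S_def by blast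
    let ?g = "gof n f"
    have a: "f (Inl ()) = - sg n ?g" using f0 sumf[of f n] by simp
    have q: "QQ n ?g = 1" using f1 sumf2[of f n] a unfolding QQ_def by (simp add: power2_eq_square)
    have "y = - NN n ?g" using val_formula[of f n] a y by (simp add: power2_eq_square)
    moreover have "lam n * QQ n ?g \<le> NN n ?g" by (rule lam_lower[OF n gof_supp])
    ultimately show ?thesis using q by simp
  qed
  have mem: "- lam n \<in> S"
  proof -
    obtain g where g: "g \<in> Kset n" and gl: "NN n g = lam n" using lam_props(1)[OF n] by blast
    have sg: "supp n g" and qg: "QQ n g = 1" using g unfolding Kset_def by auto
    define f :: "unit + nat \<Rightarrow> real" where "f z = (case z of Inl _ \<Rightarrow> - sg n g | Inr k \<Rightarrow> g k)" for z
    have gg: "gof n f = g"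
    proof
      fix k show "gof n f k = g k"
      proof (cases "k \<in> {1..n}")
        case True then show ?thesis unfolding gof_def f_def by simp
      next
        case False then have "k = 0 \<or> n < k" by auto
        then have "g k = 0" using sg unfolding supp_def by blast
        then show ?thesis unfolding gof_def by (subst if_not_P[OF False]) simp
      qed
    qed
    have A1: "(\<Sum>x\<in>VV n. f x) = 0" unfolding sumf gg by (simp add: f_def)
    have A2: "(\<Sum>x\<in>VV n. (f x)^2) = 1" unfolding sumf2 gg using qg by (simp add: f_def QQ_def add.commute)
    have A3: "(\<Sum>x\<in>VV n. \<Sum>y\<in>VV n. f x * real (gdist (VV n) EE x y) * f y) = - lam n"
      unfolding val_formula gg using gl by (simp add: f_def power2_eq_square)
    show ?thesis unfolding S_def mem_Collect_eq by (rule exI[of _ f]) (simp only: A1 A2 A3 simp_thms)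
  qed
  have "Sup S = - lam n" by (rule cSup_eq_maximum[OF mem ub])
  then show ?thesis unfolding QEC_def S_def by simp
qed




lemma adj_sum:
  assumes i: "i \<in> {1..n}"
  shows "(\<Sum>j\<in>{1..n}. adjA i j * v j) = gof n (\<lambda>z. case z of Inl _ \<Rightarrow> 0 | Inr k \<Rightarrow> v k) (i-1)
      + gof n (\<lambda>z. case z of Inl _ \<Rightarrow> 0 | Inr k \<Rightarrow> v k) (i+1)"
proof -
  let ?w = "gof n (\<lambda>z. case z of Inl _ \<Rightarrow> 0 | Inr k \<Rightarrow> v k)"
  have "(\<Sum>j\<in>{1..n}. adjA i j * v j) = (\<Sum>j\<in>{1..n}. if path_E i j then ?w j else 0)"
    by (intro sum.cong) (auto simp: adjA_def gof_def)
  also have "\<dots> = ?w (i-1) + ?w (i+1)" by (rule nb_sum[OF gof_supp i])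
  finally show ?thesis .
qed

lemma pU_nz: "pU n \<noteq> 0"
proof
  assume "pU n = 0"
  then have "tildeU n (-2) = 0" using poly_pU[of n "-2"] by simp
  then show False using U_le_m2[of "-2" n] by simp
qed

lemma ev_root:
  assumes n: "n \<ge> 1" and mu: "mu \<in> evA n"
  shows "tildeU n mu = 0"
proof -
  obtain v where nz: "\<exists>i\<in>{1..n}. v i \<noteq> 0" and e: "\<forall>i\<in>{1..n}. (\<Sum>j\<in>{1..n}. adjA i j * v j) = mu * v i"
    using mu unfolding evA_def by blast
  define w where "w = gof n (\<lambda>z. case z of Inl _ \<Rightarrow> 0 | Inr k \<Rightarrow> v k)"
  have sw: "supp n w" unfolding w_def by (rule gof_supp)
  have wv: "\<And>i. i \<in> {1..n} \<Longrightarrow> w i = v i" unfolding w_def gof_def by simp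
  have rec: "\<And>k. k \<le> n \<Longrightarrow> w (Suc k) = w 1 * tildeU k mu + 0 * Ss k mu"
  proof (rule recur[where n=n])
    show "w 0 = 0" using sw unfolding supp_def by simp
    fix i assume "1 \<le> i" "i \<le> n"
    then have i: "i \<in> {1..n}" by simp
    show "w (i - 1) + w (i + 1) = mu * w i + 0"
      using e i adj_sum[OF i, of v] wv[OF i] unfolding w_def by simp
  qed
  have "w (Suc n) = 0" using sw unfolding supp_def by simp
  then have a: "w 1 * tildeU n mu = 0" using rec[of n] by simp
  have "w 1 \<noteq> 0"
  proof
    assume w1: "w 1 = 0"
    obtain i where i: "i \<in> {1..n}" "v i \<noteq> 0" using nz by blast
    obtain k where k: "i = Suc k" "k \<le> n" using i by (cases i) auto
    have "w i = 0" using rec[OF k(2)] w1 k by simp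
    then show False using wv[OF i(1)] i by simp
  qed
  then show ?thesis using a by simp
qed

lemma mm_in: assumes n: "n \<ge> 1" shows "mm n \<in> evA n"
proof -
  define x where "x = mm n"
  define v where "v k = tildeU (k - 1) x" for k
  let ?w = "gof n (\<lambda>z. case z of Inl _ \<Rightarrow> 0 | Inr k \<Rightarrow> v k)"
  have w: "?w (Suc k) = tildeU k x" if "k \<le> n" for k
  proof (cases "k = n")
    case True then show ?thesis using U_at_mm[OF n] unfolding x_def gof_def by simp
  next
    case False then show ?thesis using that unfolding gof_def v_def by simp
  qed
  have "\<forall>i\<in>{1..n}. (\<Sum>j\<in>{1..n}. adjA i j * v j) = x * v i"
  proof
    fix i assume i: "i \<in> {1..n}"
    have vi: "v i = ?w i" using i unfolding gof_def by simp
    show "(\<Sum>j\<in>{1..n}. adjA i j * v j) = x * v i"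
    proof (cases "i = 1")
      case True
      have "?w 0 = 0" unfolding gof_def by simp
      moreover have "?w (Suc (Suc 0)) = x" using w[of 1] n by simp
      moreover have "v 1 = 1" unfolding v_def by simp
      ultimately show ?thesis unfolding adj_sum[OF i] using True by simp
    next
      case False
      then obtain j where j: "i = Suc (Suc j)" using i by (metis One_nat_def Suc_le_D Suc_le_lessD less_Suc_eq_0_disj atLeastAtMost_iff)
      have "?w (Suc j) = tildeU j x" using w[of j] i j by simp
      moreover have "?w (Suc (Suc (Suc j))) = tildeU (Suc (Suc j)) x" using w[of "Suc (Suc j)"] i j by simp
      moreover have "v i = tildeU (Suc j) x" unfolding v_def j by simp
      ultimately have "?w (i - 1) + ?w (i + 1) = x * v i" unfolding j by (simp add: tUSS)
      then show ?thesis unfolding adj_sum[OF i] .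
    qed
  qed
  moreover have "v 1 \<noteq> 0" unfolding v_def by simp
  ultimately show ?thesis unfolding evA_def x_def using n by force
qed

lemma Min_evA: assumes n: "n \<ge> 1" shows "Min (evA n) = mm n"
proof (rule Min_eqI)
  have "evA n \<subseteq> {x. poly (pU n) x = 0}" using ev_root[OF n] by (auto simp: poly_pU)
  then show "finite (evA n)" using poly_roots_finite[OF pU_nz] finite_subset by blast
  show "mm n \<in> evA n" by (rule mm_in[OF n])
  fix y assume y: "y \<in> evA n"
  show "mm n \<le> y"
  proof (rule ccontr)
    assume "\<not> mm n \<le> y"
    then have "(-1)^n * tildeU n y > 0" by (intro U_sign) simp
    then show False using ev_root[OF n y] by simp
  qed
qed




lemma mm_mono': "mm (Suc k) < mm k"
proof -
  have "cos (pi / (real k + 1)) < cos (pi / (real (Suc k) + 1))"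
    by (intro cos_monotone_0_pi) (auto simp: field_simps)
  then show ?thesis unfolding mm_def by simp
qed

lemma mm_lt2: "n \<ge> 1 \<Longrightarrow> mm n < 2"
proof -
  assume "n \<ge> 1"
  have "mm n \<le> mm 1" using \<open>n \<ge> 1\<close>
  proof (induction n rule: dec_induct)
    case base then show ?case by simp
  next
    case (step m) then show ?case using mm_mono'[of m] by simp
  qed
  also have "mm 1 < mm 0" using mm_mono'[of 0] by simp
  also have "mm 0 = 2" unfolding mm_def by simp
  finally show ?thesis .
qed

lemma mm_sin: "- mm n - 2 = - 4 * (sin (pi / (2 * (real n + 1))))^2"
proof -
  have "pi / (real n + 1) = 2 * (pi / (2 * (real n + 1)))" by (simp add: field_simps)
  then have "cos (pi / (real n + 1)) = cos (2 * (pi / (2 * (real n + 1))))" by (rule arg_cong)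
  also have "\<dots> = 1 - 2 * (sin (pi / (2 * (real n + 1))))^2" by (rule cos_double_sin)
  finally show ?thesis unfolding mm_def by simp
qed

lemma lam_mono: assumes n: "n \<ge> 1" shows "lam (Suc n) \<le> lam n"
proof -
  obtain g where g: "g \<in> Kset n" and gl: "NN n g = lam n" using lam_props(1)[OF n] by blast
  have sg: "supp n g" and qg: "QQ n g = 1" using g unfolding Kset_def by auto
  have sg': "supp (Suc n) g" using sg unfolding supp_def by auto
  have z: "g (Suc n) = 0" "g (Suc (Suc n)) = 0" using sg unfolding supp_def by auto
  have "NN (Suc n) g = NN n g" unfolding NN_def using z by simp
  moreover have "QQ (Suc n) g = QQ n g" unfolding QQ_def sg_def using z
    by (simp add: atLeastAtMostSuc_conv)
  moreover have "lam (Suc n) * QQ (Suc n) g \<le> NN (Suc n) g" by (rule lam_lower) (use sg' in auto)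
  ultimately show ?thesis using qg gl by simp
qed

definition evv :: "nat \<Rightarrow> nat \<Rightarrow> real" where
  "evv n k = (if k \<in> {1..n} then tildeU (k - 1) (mm n) else 0)"

lemma evv_props:
  assumes n: "n \<ge> 1"
  shows "supp n (evv n)" "evv n 1 = 1" "sg n (evv n) = Ss n (mm n)"
    "NN n (evv n) = (mm n + 2) * (\<Sum>i\<in>{1..n}. (evv n i)^2)"
proof -
  let ?x = "mm n"
  show s: "supp n (evv n)" unfolding supp_def evv_def by auto
  show "evv n 1 = 1" using n unfolding evv_def by simp
  have w: "evv n (Suc k) = tildeU k ?x" if "k \<le> n" for k
  proof (cases "k = n")
    case True then show ?thesis using U_at_mm[OF n] unfolding evv_def by simp
  next
    case False then show ?thesis using that unfolding evv_def by simp
  qed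
  have "sg n (evv n) = (\<Sum>k<n. evv n (Suc k))" unfolding sg_def by (rule sum_shift1)
  also have "\<dots> = (\<Sum>k<n. tildeU k ?x)" using w by (intro sum.cong) auto
  finally show "sg n (evv n) = Ss n ?x" by (simp add: Ss_def)
  have e: "evv n (i - 1) + 2 * evv n i + evv n (i + 1) = (?x + 2) * evv n i" if i: "i \<in> {1..n}" for i
  proof (cases "i = 1")
    case True
    have "evv n 0 = 0" unfolding evv_def by simp
    moreover have "evv n (Suc (Suc 0)) = ?x" using w[of 1] n by simp
    moreover have "evv n 1 = 1" using n unfolding evv_def by simp
    ultimately show ?thesis using True by simp
  next
    case False
    then obtain j where j: "i = Suc (Suc j)" using i by (metis One_nat_def Suc_le_D Suc_le_lessD less_Suc_eq_0_disj atLeastAtMost_iff)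
    have "evv n (Suc j) = tildeU j ?x" using w[of j] i j by simp
    moreover have "evv n (Suc (Suc (Suc j))) = tildeU (Suc (Suc j)) ?x" using w[of "Suc (Suc j)"] i j by simp
    moreover have "evv n (Suc (Suc j)) = tildeU (Suc j) ?x" using w[of "Suc j"] i j by simp
    ultimately show ?thesis unfolding j by (simp add: tUSS algebra_simps)
  qed
  show "NN n (evv n) = (?x + 2) * (\<Sum>i\<in>{1..n}. (evv n i)^2)" by (rule eig_NN0[OF s e])
qed

lemma odd_upper:
  assumes n: "n \<ge> 1" and od: "odd n"
  shows "lam n < mm n + 2"
proof -
  let ?x = "mm n" and ?v = "evv n"
  obtain m where m: "n = Suc m" using n by (cases n) auto
  have em: "even m" using od m by simp
  have "?x < mm m" using mm_mono'[of m] m by simp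
  then have "(-1)^m * tildeU m ?x > 0" by (rule U_sign)
  then have um: "tildeU m ?x > 0" using em by simp
  have "(?x - 2) * Ss n ?x = tildeU n ?x - tildeU m ?x - 1" using Ss_closed[of ?x m] m by simp
  also have "\<dots> = - tildeU m ?x - 1" using U_at_mm[OF n] by simp
  finally have "(?x - 2) * Ss n ?x \<noteq> 0" using um by simp
  then have S: "Ss n ?x \<noteq> 0" by auto
  have q: "QQ n ?v = (\<Sum>i\<in>{1..n}. (?v i)^2) + (Ss n ?x)^2" unfolding QQ_def evv_props(3)[OF n] ..
  have nz: "\<exists>k. ?v k \<noteq> 0" using evv_props(2)[OF n] by (intro exI[of _ 1]) simp
  have qp: "QQ n ?v > 0" by (rule QQ_pos[OF evv_props(1)[OF n] nz])
  have "lam n * QQ n ?v \<le> NN n ?v" by (rule lam_lower[OF n evv_props(1)[OF n]])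
  also have "\<dots> = (?x + 2) * (\<Sum>i\<in>{1..n}. (?v i)^2)" by (rule evv_props(4)[OF n])
  also have "\<dots> < (?x + 2) * QQ n ?v" unfolding q using mm_pos2[of n] S
    by (intro mult_strict_left_mono) auto
  finally show ?thesis using qp by simp
qed

lemma even_upper:
  assumes n: "n \<ge> 2" and ev: "even n"
  shows "lam n \<le> mm n + 2"
proof -
  have n1: "n \<ge> 1" using n by simp
  let ?x = "mm n" and ?v = "evv n"
  obtain m where m: "n = Suc m" using n by (cases n) auto
  have om: "odd m" using ev m by simp
  have "?x < mm m" using mm_mono'[of m] m by simp
  then have "(-1)^m * tildeU m ?x > 0" by (rule U_sign)
  then have um: "tildeU m ?x < 0" using om by simp
  have "(tildeU (Suc m) ?x)^2 + (tildeU m ?x)^2 - ?x * tildeU (Suc m) ?x * tildeU m ?x = 1" by (rule cassini)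
  then have "(tildeU m ?x)^2 = 1" using U_at_mm[OF n1] m by simp
  then have "tildeU m ?x = -1" using um by (smt (verit) power2_eq_1_iff)
  moreover have "(?x - 2) * Ss n ?x = tildeU n ?x - tildeU m ?x - 1" using Ss_closed[of ?x m] m by simp
  ultimately have "(?x - 2) * Ss n ?x = 0" using U_at_mm[OF n1] by simp
  moreover have "?x - 2 \<noteq> 0" using mm_lt2[OF n1] by simp
  ultimately have S: "Ss n ?x = 0" by simp
  have q: "QQ n ?v = (\<Sum>i\<in>{1..n}. (?v i)^2)" unfolding QQ_def evv_props(3)[OF n1] S by simp
  have nz: "\<exists>k. ?v k \<noteq> 0" using evv_props(2)[OF n1] by (intro exI[of _ 1]) simp
  show ?thesis by (rule lam_le[OF n1 evv_props(1)[OF n1] nz]) (simp add: evv_props(4)[OF n1] q)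
qed




lemma mm2: "mm 2 = -1"
proof -
  have "pi / (real 2 + 1) = pi / 3" by simp
  then show ?thesis unfolding mm_def by (simp add: cos_60)
qed

lemma Phi2: "Phi 2 x = 3 * (x - 2)^2 * (x + 1)^2"
proof -
  have h: "tildeU 2 x = x * x - 1" using tUSS[of 0 x] by (simp add: numeral_2_eq_2)
  have h1: "tildeU (2 - 1) x = x" by simp
  show ?thesis unfolding Phi_def h h1 by (simp add: power2_eq_square algebra_simps)
qed

lemma mm_small:
  assumes n: "n \<ge> 1"
  shows "(mm n + 2) * (real n + 1)^2 \<le> 10"
proof -
  define y where "y = pi / (2 * (real n + 1))"
  have "mm n + 2 = 4 * (sin y)^2" using mm_sin[of n] unfolding y_def by simp
  also have "\<dots> \<le> 4 * y^2"
  proof -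
    have "\<bar>sin y\<bar> \<le> \<bar>y\<bar>" by (rule abs_sin_x_le_abs_x)
    then have "\<bar>sin y\<bar>^2 \<le> \<bar>y\<bar>^2" by (intro power_mono) auto
    then show ?thesis by simp
  qed
  finally have a0: "mm n + 2 \<le> 4 * y^2" .
  have a: "(mm n + 2) * (real n + 1)^2 \<le> 4 * y^2 * (real n + 1)^2"
    using a0 by (intro mult_right_mono) auto
  have py: "2 * (real n + 1) * y = pi" unfolding y_def by simp
  have "4 * y^2 * (real n + 1)^2 = (2 * (real n + 1) * y)^2" by (simp add: power2_eq_square algebra_simps)
  also have "\<dots> = pi^2" unfolding py ..
  also have "\<dots> \<le> 10"
  proof -
    have "pi \<le> 3.16" using pi_approx by simp
    then have "pi * pi \<le> 3.16 * 3.16" by (intro mult_mono) auto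
    then show ?thesis by (simp add: power2_eq_square)
  qed
  finally have b: "4 * y^2 * (real n + 1)^2 \<le> 10" .
  show ?thesis using a b by linarith
qed

lemma Phi_pos_mid:
  assumes n4: "n \<ge> 4" and ev: "even n" and x1: "-2 < x" and x2: "x < mm n"
  shows "Phi n x > 0"
proof -
  have n1: "n \<ge> 1" using n4 by simp
  obtain m where m: "n = Suc m" using n1 by (cases n) auto
  have om: "odd m" using ev m by simp
  define N where "N = real n"
  have N4: "N \<ge> 4" unfolding N_def using n4 by simp
  define d where "d = x + 2"
  have d0: "d > 0" unfolding d_def using x1 by simp
  have dN: "d * (N + 1)^2 < 10"
  proof -
    have dl: "d < mm n + 2" unfolding d_def using x2 by simp
    have "d * (real n + 1)^2 < (mm n + 2) * (real n + 1)^2" using dl by (intro mult_strict_right_mono) auto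
    moreover have "(mm n + 2) * (real n + 1)^2 \<le> 10" by (rule mm_small[OF n1])
    ultimately have "d * (real n + 1)^2 < 10" by linarith
    then show ?thesis unfolding N_def .
  qed
  have key: "c * d < 16" if c: "c > 0" "10 * c \<le> 16 * (N + 1)^2" for c
  proof -
    have "c * d * (N + 1)^2 < c * 10" using dN c by (simp add: mult.assoc)
    also have "\<dots> \<le> 16 * (N + 1)^2" using c by simp
    finally have "(c * d) * (N + 1)^2 < 16 * (N + 1)^2" by simp
    moreover have "(N + 1)^2 > 0" using N4 by simp
    ultimately show ?thesis using mult_less_cancel_right_pos[of "(N+1)^2" "c * d" 16] by simp
  qed
  have sq: "16 * (N + 1)^2 = 16 * N * N + 32 * N + 16" by (simp add: power2_eq_square algebra_simps)
  have "N * N \<ge> 4 * N" using N4 by (intro mult_right_mono) auto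
  then have NN4: "16 * N * N \<ge> 64 * N" by simp
  have e1: "10 * (4 * N + 10) = 40 * N + 100" by simp
  have "10 * (4 * N + 10) \<le> 16 * (N + 1)^2" using e1 sq N4 NN4 by linarith
  then have c1: "(4 * N + 10) * d < 16" using N4 by (intro key) auto
  have e2: "10 * (4 * N + 14) = 40 * N + 140" by simp
  have "10 * (4 * N + 14) \<le> 16 * (N + 1)^2" using e2 sq N4 NN4 by linarith
  then have c2: "(4 * N + 14) * d < 16" using N4 by (intro key) auto
  define P where "P = (real n + 1) * x^2 - 6 * x - 4 * real n"
  define P2 where "P2 = P + 2 * x * (x + 2)"
  have Pe: "P = 16 - (4 * N + 10) * d + (N + 1) * d^2" unfolding P_def N_def d_def by (simp add: power2_eq_square algebra_simps)
  have P2e: "P2 = 16 - (4 * N + 14) * d + (N + 3) * d^2" unfolding P2_def P_def N_def d_def by (simp add: power2_eq_square algebra_simps)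
  have "(N + 1) * d^2 \<ge> 0" "(N + 3) * d^2 \<ge> 0" using N4 by simp_all
  then have Pp: "P > 0" and P2p: "P2 > 0" unfolding Pe P2e using c1 c2 by linarith+
  define u where "u = tildeU n x"
  define w where "w = - tildeU m x"
  have "(-1)^n * tildeU n x > 0" using x2 by (rule U_sign)
  then have up: "u > 0" using ev unfolding u_def by simp
  have "x < mm m" using x2 mm_mono'[of m] m by simp
  then have "(-1)^m * tildeU m x > 0" by (rule U_sign)
  then have wp: "w > 0" using om unfolding w_def by simp
  have cas: "u^2 + w^2 + x * u * w = 1" using cassini[of m x] unfolding u_def w_def m by simp
  have Phe: "Phi n x = P * u + 2 * (x + 2) * (1 - w)"
    unfolding Phi_def P_def u_def w_def using m by (simp add: algebra_simps)
  have "Phi n x * (1 + w) = u * (P + w * P2 + 2 * (x + 2) * u) + 2 * (x + 2) * (1 - w^2 - x * u * w - u^2)"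
    unfolding Phe P2_def by (simp add: power2_eq_square algebra_simps)
  also have "\<dots> = u * (P + w * P2 + 2 * (x + 2) * u)" using cas by simp
  also have "\<dots> > 0"
  proof -
    have "w * P2 > 0" using wp P2p by simp
    moreover have "2 * (x + 2) * u > 0" using x1 up by simp
    ultimately have "P + w * P2 + 2 * (x + 2) * u > 0" using Pp by linarith
    then show ?thesis using up by simp
  qed
  finally have "Phi n x * (1 + w) > 0" .
  then show ?thesis using wp by (simp add: zero_less_mult_iff)
qed

lemma even_lower:
  assumes n: "n \<ge> 2" and ev: "even n"
  shows "mm n \<le> lam n - 2"
proof (rule ccontr)
  assume "\<not> mm n \<le> lam n - 2"
  then have lt: "lam n - 2 < mm n" by simp
  have n1: "n \<ge> 1" using n by simp
  have r: "Phi n (lam n - 2) = 0" by (rule lam_root[OF n1])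
  show False
  proof (cases "lam n - 2 \<le> -2")
    case True
    then show False using Phi_sign_le_m2[OF n1 True] r by simp
  next
    case False
    show False
    proof (cases "n = 2")
      case True
      then have "lam n - 2 < -1" using lt mm2 by simp
      have "Phi 2 (lam n - 2) = 0" using r True by simp
      then have "3 * (lam n - 2 - 2)^2 * (lam n - 2 + 1)^2 = 0" unfolding Phi2 .
      then show False using \<open>lam n - 2 < -1\<close> by simp
    next
      case n2: False
      have "n \<ge> 4" using n n2 ev by presburger
      then show False using Phi_pos_mid[OF _ ev _ lt] False r by simp
    qed
  qed
qed




theorem theorem4p1:
  fixes n :: nat
  assumes "n \<ge> 1"
  shows "QEC (join_V K1_V (path_V n)) (join_E K1_E path_E) = - alpha_tilde n - 2
    \<and> (even n \<longrightarrow> n \<ge> 2 \<longrightarrow>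
           alpha_tilde n = Min (evA n) \<and>
           QEC (join_V K1_V (path_V n)) (join_E K1_E path_E) = - Min (evA n) - 2 \<and>
           QEC (join_V K1_V (path_V n)) (join_E K1_E path_E) = - 4 * (sin (pi / (2 * (real n + 1))))\<^sup>2)
    \<and> (odd n \<longrightarrow>
           Min (evA (n + 1)) \<le> alpha_tilde n \<and> alpha_tilde n < Min (evA n) \<and>
           - 4 * (sin (pi / (2 * (real n + 1))))\<^sup>2 < QEC (join_V K1_V (path_V n)) (join_E K1_E path_E) \<and>
           QEC (join_V K1_V (path_V n)) (join_E K1_E path_E) \<le> - 4 * (sin (pi / (2 * (real n + 2))))\<^sup>2)"
proof -
  have n: "n \<ge> 1" by (rule assms)
  have Q: "QEC (join_V K1_V (path_V n)) (join_E K1_E path_E) = - lam n" by (rule QEC_lam[OF n])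
  have A: "alpha_tilde n = lam n - 2" by (rule alpha_lam[OF n])
  have P1: "QEC (join_V K1_V (path_V n)) (join_E K1_E path_E) = - alpha_tilde n - 2" using Q A by simp
  have P2: "even n \<longrightarrow> n \<ge> 2 \<longrightarrow>
           alpha_tilde n = Min (evA n) \<and>
           QEC (join_V K1_V (path_V n)) (join_E K1_E path_E) = - Min (evA n) - 2 \<and>
           QEC (join_V K1_V (path_V n)) (join_E K1_E path_E) = - 4 * (sin (pi / (2 * (real n + 1))))\<^sup>2"
  proof (intro impI)
    assume ev: "even n" and n2: "n \<ge> 2"
    have am: "alpha_tilde n = mm n" using even_upper[OF n2 ev] even_lower[OF n2 ev] A by simp
    have M: "Min (evA n) = mm n" by (rule Min_evA[OF n])
    show "alpha_tilde n = Min (evA n) \<and>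
           QEC (join_V K1_V (path_V n)) (join_E K1_E path_E) = - Min (evA n) - 2 \<and>
           QEC (join_V K1_V (path_V n)) (join_E K1_E path_E) = - 4 * (sin (pi / (2 * (real n + 1))))\<^sup>2"
      using am M P1 mm_sin[of n] by simp
  qed
  have P3: "odd n \<longrightarrow>
           Min (evA (n + 1)) \<le> alpha_tilde n \<and> alpha_tilde n < Min (evA n) \<and>
           - 4 * (sin (pi / (2 * (real n + 1))))\<^sup>2 < QEC (join_V K1_V (path_V n)) (join_E K1_E path_E) \<and>
           QEC (join_V K1_V (path_V n)) (join_E K1_E path_E) \<le> - 4 * (sin (pi / (2 * (real n + 2))))\<^sup>2"
  proof (intro impI)
    assume od: "odd n"
    have n2: "Suc n \<ge> 2" using n by simp
    have ev: "even (Suc n)" using od by simp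
    have M1: "Min (evA (n + 1)) = mm (Suc n)" using Min_evA[of "Suc n"] by simp
    have M: "Min (evA n) = mm n" by (rule Min_evA[OF n])
    have a1: "mm (Suc n) \<le> alpha_tilde n"
      using even_lower[OF n2 ev] lam_mono[OF n] A by simp
    have a2: "alpha_tilde n < mm n" using odd_upper[OF n od] A by simp
    have s1: "- 4 * (sin (pi / (2 * (real n + 1))))\<^sup>2 = - mm n - 2" using mm_sin[of n] by simp
    have s2: "- 4 * (sin (pi / (2 * (real n + 2))))\<^sup>2 = - mm (Suc n) - 2"
      using mm_sin[of "Suc n"] by (simp add: add.commute add.left_commute)
    show "Min (evA (n + 1)) \<le> alpha_tilde n \<and> alpha_tilde n < Min (evA n) \<and>
           - 4 * (sin (pi / (2 * (real n + 1))))\<^sup>2 < QEC (join_V K1_V (path_V n)) (join_E K1_E path_E) \<and>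
           QEC (join_V K1_V (path_V n)) (join_E K1_E path_E) \<le> - 4 * (sin (pi / (2 * (real n + 2))))\<^sup>2"
      unfolding s1 s2 P1 M1 M using a1 a2 by simp
  qed
  show ?thesis using P1 P2 P3 by blast
qed


end
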